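(* Let $\mathcal{X}\subseteq\mathbb{R}^d$ and let $\mathcal{M}$ be a mechanism on weighted data sets admitting a weighted distinguishability profile $\epsilon\colon[1,\infty)\times\mathcal{X}\to\mathbb{R}_{\ge0}$ that is differentiable in $w$, with $\epsilon'(w,\mathbf{x})=\partial\epsilon(w,\mathbf{x})/\partial w$, and let $\tilde\epsilon(\mathbf{x})=\epsilon(1,\mathbf{x})$ (the distinguishability profile of the unweighted counterpart $\widetilde{\mathcal{M}}(\{\mathbf{x}_i\})=\mathcal{M}(\{(1,\mathbf{x}_i)\})$). Let $S$ be any Poisson importance sampler, with selection-probability function $q$, and let $\psi(\mathbf{x})=\log\big(1+q(\mathbf{x})(e^{\epsilon(1/q(\mathbf{x}),\mathbf{x})}-1)\big)$ be the distinguishability profile of $\mathcal{M}\circ S$. Let $\mathbf{x}\in\mathcal{X}$. If $\epsilon(w,\mathbf{x})\le w\,\epsilon'(w,\mathbf{x})$ for all $w\ge1$, then $\psi(\mathbf{x})\ge\tilde\epsilon(\mathbf{x})$.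
   Context: A weighted data set is a finite set $\{(w_i,\mathbf{x}_i)\}$ with $w_i\ge1$, $\mathbf{x}_i\in\mathcal{X}$. Distributions $P,Q$ are $\epsilon$-indistinguishable if $P(Y)\le e^\epsilon Q(Y)$ and $Q(Y)\le e^\epsilon P(Y)$ for all measurable $Y$. A weighted distinguishability profile of $\mathcal{M}$ is a function $\epsilon\colon[1,\infty)\times\mathcal{X}\to\mathbb{R}_{\ge0}$ such that for every weighted data set $\mathcal{S}$ and every $(w',\mathbf{x}')$, $\mathcal{M}(\mathcal{S})$ and $\mathcal{M}(\mathcal{S}\cup\{(w',\mathbf{x}')\})$ are $\epsilon(w',\mathbf{x}')$-indistinguishable. A Poisson importance sampler for a function $q\colon\mathcal{X}\to(0,1]$ maps $\mathcal{D}=\{\mathbf{x}_1,\dots,\mathbf{x}_n\}$ to $\{(1/q(\mathbf{x}_i),\mathbf{x}_i)\mid\gamma_i=1\}$ with $\gamma_i$ independent Bernoulli$(q(\mathbf{x}_i))$. *)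

theory Defs
  imports "HOL-Analysis.Analysis" "HOL-Probability.Probability"
begin

definition weighted_dataset :: "'a set \<Rightarrow> (real \<times> 'a) set \<Rightarrow> bool" where
  "weighted_dataset X S \<longleftrightarrow> finite S \<and> (\<forall>(w, x) \<in> S. w \<ge> 1 \<and> x \<in> X)"

definition indist :: "'b measure \<Rightarrow> 'b measure \<Rightarrow> real \<Rightarrow> bool" where
  "indist P Q eps \<longleftrightarrow> sets P = sets Q \<and>
     (\<forall>Y \<in> sets P. emeasure P Y \<le> ennreal (exp eps) * emeasure Q Y
                  \<and> emeasure Q Y \<le> ennreal (exp eps) * emeasure P Y)"

definition weighted_dist_profile ::
    "'a set \<Rightarrow> ((real \<times> 'a) set \<Rightarrow> 'b measure) \<Rightarrow> (real \<Rightarrow> 'a \<Rightarrow> real) \<Rightarrow> bool" where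
  "weighted_dist_profile X M eps \<longleftrightarrow>
     (\<forall>w x. w \<ge> 1 \<longrightarrow> x \<in> X \<longrightarrow> eps w x \<ge> 0) \<and>
     (\<forall>S w' x'. weighted_dataset X S \<longrightarrow> w' \<ge> 1 \<longrightarrow> x' \<in> X \<longrightarrow>
        indist (M S) (M (S \<union> {(w', x')})) (eps w' x'))"

definition psi :: "(real \<Rightarrow> 'a \<Rightarrow> real) \<Rightarrow> ('a \<Rightarrow> real) \<Rightarrow> 'a \<Rightarrow> real" where
  "psi eps q x = ln (1 + q x * (exp (eps (1 / q x) x) - 1))"

end

theory Submission
  imports Defs
begin

lemma exp_bern:
  fixes a w :: real
  assumes a: "a \<ge> 0" and w: "w \<ge> 1"
  shows "1 + w * (exp a - 1) \<le> exp (w * a)"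
proof -
  let ?h = "\<lambda>t. exp (t * a) - 1 - t * (exp a - 1)"
  have "?h 1 \<le> ?h w"
  proof (rule DERIV_nonneg_imp_nondecreasing[OF w])
    fix t assume t: "1 \<le> t" "t \<le> w"
    have d: "DERIV ?h t :> (a * exp (t * a) - (exp a - 1))"
      by (auto intro!: derivative_eq_intros)
    have "exp a - 1 \<le> a * exp a"
    proof -
      have "1 - a \<le> exp (-a)" using exp_ge_add_one_self[of "-a"] by simp
      hence "exp a * (1 - a) \<le> exp a * exp (-a)" by (simp add: mult_left_mono)
      thus ?thesis by (simp add: exp_minus algebra_simps)
    qed
    also have "a * exp a \<le> a * exp (t * a)"
      using a t by (intro mult_left_mono) (auto simp: mult_le_cancel_right1)
    finally show "\<exists>y. DERIV ?h t :> y \<and> y \<ge> 0" using d by auto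
  qed
  thus ?thesis by simp
qed

theorem proposition3:
  fixes X :: "(real ^ 'd) set"
    and M :: "(real \<times> (real ^ 'd)) set \<Rightarrow> 'b measure"
    and eps eps' :: "real \<Rightarrow> real ^ 'd \<Rightarrow> real"
    and q :: "real ^ 'd \<Rightarrow> real"
    and x :: "real ^ 'd"
  assumes prob: "\<And>S. weighted_dataset X S \<Longrightarrow> prob_space (M S)"
    and profile: "weighted_dist_profile X M eps"
    and deriv: "\<And>w y. w \<ge> 1 \<Longrightarrow> y \<in> X \<Longrightarrow>
                  ((\<lambda>v. eps v y) has_real_derivative eps' w y) (at w within {1..})"
    and q_range: "\<And>y. y \<in> X \<Longrightarrow> 0 < q y \<and> q y \<le> 1"
    and x_in: "x \<in> X"
    and cond: "\<And>w. w \<ge> 1 \<Longrightarrow> eps w x \<le> w * eps' w x"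
  shows "psi eps q x \<ge> eps 1 x"
proof -
  define f where "f = (\<lambda>v. eps v x)"
  define w where "w = 1 / q x"
  have q0: "0 < q x" "q x \<le> 1" using q_range x_in by auto
  have w1: "w \<ge> 1" using q0 by (simp add: w_def)
  have qw: "q x = 1 / w" using q0 by (simp add: w_def)
  have a0: "f 1 \<ge> 0" using profile x_in by (simp add: weighted_dist_profile_def f_def)
  have mono: "f 1 / 1 \<le> f w / w"
  proof (rule DERIV_nonneg_imp_increasing_open[OF w1])
    fix v :: real assume v: "1 < v" "v < w"
    have "at v within {1..} = at v"
      by (rule at_within_interior) (use v in auto)
    hence df: "DERIV f v :> eps' v x" using deriv[of v x] v x_in by (simp add: f_def)
    have "DERIV (\<lambda>v. f v / v) v :> (eps' v x * v - f v * 1) / (v * v)"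
      using v by (auto intro!: derivative_eq_intros df)
    moreover have "(eps' v x * v - f v * 1) / (v * v) \<ge> 0"
      using cond[of v] v by (simp add: f_def algebra_simps)
    ultimately show "\<exists>y. DERIV (\<lambda>v. f v / v) v :> y \<and> 0 \<le> y" by blast
  next
    have "continuous_on {1..w} f"
    proof -
      have "continuous_on {1..} f"
        unfolding continuous_on_eq_continuous_within
        using deriv x_in by (auto simp: f_def intro: DERIV_continuous)
      thus ?thesis by (rule continuous_on_subset) auto
    qed
    thus "continuous_on {1..w} (\<lambda>v. f v / v)"
      by (intro continuous_on_divide continuous_intros) auto
  qed
  hence fw: "w * f 1 \<le> f w" using w1 by (simp add: field_simps)
  have "1 + w * (exp (f 1) - 1) \<le> exp (w * f 1)" by (rule exp_bern[OF a0 w1])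
  also have "\<dots> \<le> exp (f w)" using fw by (simp add: mult.commute)
  finally have key: "exp (f 1) \<le> 1 + (exp (f w) - 1) / w" using w1 by (simp add: field_simps)
  have pos: "0 < 1 + (exp (f w) - 1) / w" using w1
    by (smt (verit) divide_pos_pos exp_gt_zero key)
  have "psi eps q x = ln (1 + (exp (f w) - 1) / w)"
    by (simp add: psi_def qw f_def w_def[symmetric])
  moreover have "f 1 \<le> ln (1 + (exp (f w) - 1) / w)"
    using key pos by (subst ln_ge_iff) auto
  ultimately show ?thesis by (simp add: f_def)
qed

end
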